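(* Let $m\ge 2$, $\mathfrak m=1/(2m-1)$, and $s_n=\sum_{k=0}^{n-1}(-\mathfrak m)^k$ for $n\ge 1$, $s_0=0$. Let $x_0x_1x_2\dots$ be a random freely reduced infinite word in $m$ generators. For any letters $x,y$ (not necessarily distinct) and any $n\ge1$, the conditional probability $P_n(x,y)=\Pr(x_n=x\mid x_0=y)$ lies between $\mathfrak m\cdot s_{n-1}$ and $\mathfrak m\cdot s_n$ (i.e. between the smaller and the larger of these two numbers). In particular, $$\frac{2m-2}{(2m-1)^2}\le \Pr(x_2=x\mid x_0=y)\le \frac1{2m-1}.$$
   Context: Letters are the $2m$ elements $a_1^{\pm1},\dots,a_m^{\pm1}$. A random freely reduced infinite word is chosen so that $x_0$ is uniform among the $2m$ letters and each $x_{i+1}$ is uniform among the $2m-1$ letters different from $x_i^{-1}$. *)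

theory Defs
  imports Complex_Main
begin

text \<open>Letters: the pair (i, True) stands for a_i, (i, False) for a_i^{-1}, with i < m.\<close>
type_synonym letter = "nat \<times> bool"

definition letters :: "nat \<Rightarrow> letter set" where
  "letters m = {0..<m} \<times> UNIV"

definition linv :: "letter \<Rightarrow> letter" where
  "linv a = (fst a, \<not> snd a)"

definition freely_reduced :: "letter list \<Rightarrow> bool" where
  "freely_reduced w = (\<forall>i. Suc i < length w \<longrightarrow> w ! Suc i \<noteq> linv (w ! i))"

text \<open>Probability of the cylinder event (x_0 .. x_{k-1}) = w for the random freely reduced
  infinite word: x_0 uniform on the 2m letters, each next letter uniform among the 2m-1
  letters different from the inverse of the previous one.\<close>
definition cyl_prob :: "nat \<Rightarrow> letter list \<Rightarrow> real" where
  "cyl_prob m w = (if w \<noteq> [] \<and> set w \<subseteq> letters m \<and> freely_reduced w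
     then (1 / (2 * real m)) * (1 / (2 * real m - 1)) ^ (length w - 1) else 0)"

definition cond_prob :: "nat \<Rightarrow> nat \<Rightarrow> letter \<Rightarrow> letter \<Rightarrow> real" where
  "cond_prob m n x y =
     (\<Sum>w\<in>{w. length w = Suc n \<and> set w \<subseteq> letters m \<and> w ! 0 = y \<and> w ! n = x}. cyl_prob m w)
     / (\<Sum>w\<in>{w. length w = Suc n \<and> set w \<subseteq> letters m \<and> w ! 0 = y}. cyl_prob m w)"

definition frak_m :: "nat \<Rightarrow> real" where
  "frak_m m = 1 / (2 * real m - 1)"

definition s_seq :: "nat \<Rightarrow> nat \<Rightarrow> real" where
  "s_seq m n = (\<Sum>k<n. (- frak_m m) ^ k)"

end

theory Submission
  imports Defs
begin

definition FF :: "nat \<Rightarrow> nat \<Rightarrow> letter \<Rightarrow> letter \<Rightarrow> real" where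
  "FF m n y x = (\<Sum>w\<in>{w. length w = Suc n \<and> set w \<subseteq> letters m \<and> w ! 0 = y \<and> w ! n = x}. cyl_prob m w)"

definition GG :: "nat \<Rightarrow> nat \<Rightarrow> letter \<Rightarrow> real" where
  "GG m n y = (\<Sum>w\<in>{w. length w = Suc n \<and> set w \<subseteq> letters m \<and> w ! 0 = y}. cyl_prob m w)"

lemma finite_letters: "finite (letters m)"
  by (simp add: letters_def)

lemma card_letters: "card (letters m) = 2 * m"
  by (simp add: letters_def card_cartesian_product)

lemma linv_linv[simp]: "linv (linv a) = a"
  by (simp add: linv_def)

lemma linv_letters: "a \<in> letters m \<Longrightarrow> linv a \<in> letters m"
  by (simp add: linv_def letters_def mem_Times_iff)

lemma fin_W: "finite {w. length w = Suc n \<and> set w \<subseteq> letters m \<and> P w}"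
proof -
  have "finite {w. set w \<subseteq> letters m \<and> length w = Suc n}"
    by (rule finite_lists_length_eq[OF finite_letters])
  then show ?thesis by (rule rev_finite_subset) auto
qed

lemma fr_snoc:
  assumes "w \<noteq> []"
  shows "freely_reduced (w @ [x]) \<longleftrightarrow> freely_reduced w \<and> x \<noteq> linv (last w)"
proof
  assume h: "freely_reduced (w @ [x])"
  have "freely_reduced w"
    unfolding freely_reduced_def
  proof (intro allI impI)
    fix i assume "Suc i < length w"
    with h show "w ! Suc i \<noteq> linv (w ! i)"
      unfolding freely_reduced_def by (auto simp: nth_append dest: spec[of _ i])
  qed
  moreover have "x \<noteq> linv (last w)"
    using h assms unfolding freely_reduced_def
    by (auto simp: nth_append last_conv_nth dest!: spec[of _ "length w - 1"])
  ultimately show "freely_reduced w \<and> x \<noteq> linv (last w)" by blast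
next
  assume h: "freely_reduced w \<and> x \<noteq> linv (last w)"
  show "freely_reduced (w @ [x])"
    unfolding freely_reduced_def
  proof (intro allI impI)
    fix i assume i: "Suc i < length (w @ [x])"
    show "(w @ [x]) ! Suc i \<noteq> linv ((w @ [x]) ! i)"
    proof (cases "Suc i < length w")
      case True
      then show ?thesis using h unfolding freely_reduced_def by (auto simp: nth_append)
    next
      case False
      then have "i = length w - 1" using i by simp
      then show ?thesis using h assms False
        by (auto simp: nth_append last_conv_nth)
    qed
  qed
qed

lemma cyl_snoc:
  assumes "w \<noteq> []"
  shows "cyl_prob m (w @ [x]) = (if x \<in> letters m \<and> x \<noteq> linv (last w) then cyl_prob m w / (2 * real m - 1) else 0)"
proof -
  obtain k where k: "length w = Suc k" using assms by (cases w) auto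
  show ?thesis
    unfolding cyl_prob_def using fr_snoc[OF assms, of x] k by auto
qed


lemma W_snoc:
  "{w. length w = Suc (Suc n) \<and> set w \<subseteq> letters m \<and> w ! 0 = y \<and> w ! Suc n = x}
   = (\<lambda>w. w @ [x]) ` {w. length w = Suc n \<and> set w \<subseteq> letters m \<and> w ! 0 = y \<and> x \<in> letters m}"
proof (rule set_eqI, rule iffI)
  fix v assume v: "v \<in> {w. length w = Suc (Suc n) \<and> set w \<subseteq> letters m \<and> w ! 0 = y \<and> w ! Suc n = x}"
  then have ne: "v \<noteq> []" by auto
  have lv: "last v = x" using v ne by (simp add: last_conv_nth)
  have e: "v = butlast v @ [x]" using ne lv append_butlast_last_id by metis
  have "x \<in> set v" using v by (auto simp: in_set_conv_nth)
  moreover have "butlast v ! 0 = y" using v by (simp add: nth_butlast)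
  ultimately show "v \<in> (\<lambda>w. w @ [x]) ` {w. length w = Suc n \<and> set w \<subseteq> letters m \<and> w ! 0 = y \<and> x \<in> letters m}"
    using v e by (auto intro!: image_eqI[of _ _ "butlast v"] dest: in_set_butlastD)
next
  fix v assume "v \<in> (\<lambda>w. w @ [x]) ` {w. length w = Suc n \<and> set w \<subseteq> letters m \<and> w ! 0 = y \<and> x \<in> letters m}"
  then show "v \<in> {w. length w = Suc (Suc n) \<and> set w \<subseteq> letters m \<and> w ! 0 = y \<and> w ! Suc n = x}"
    by (auto simp: nth_append)
qed

lemma FF_step:
  assumes x: "x \<in> letters m"
  shows "FF m (Suc n) y x = (\<Sum>z\<in>letters m - {linv x}. FF m n y z) / (2 * real m - 1)"
proof -
  let ?V = "{w. length w = Suc n \<and> set w \<subseteq> letters m \<and> w ! 0 = y}"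
  have V: "{w. length w = Suc n \<and> set w \<subseteq> letters m \<and> w ! 0 = y \<and> x \<in> letters m} = ?V"
    using x by simp
  have "FF m (Suc n) y x = (\<Sum>w\<in>?V. cyl_prob m (w @ [x]))"
    unfolding FF_def W_snoc V by (subst sum.reindex) (auto simp: inj_on_def)
  also have "\<dots> = (\<Sum>w\<in>?V. (if w ! n \<noteq> linv x then cyl_prob m w / (2 * real m - 1) else 0))"
  proof (rule sum.cong[OF refl])
    fix w assume w: "w \<in> ?V"
    then have ne: "w \<noteq> []" by auto
    have l: "last w = w ! n" using w ne by (simp add: last_conv_nth)
    have "(x \<noteq> linv (w ! n)) = (w ! n \<noteq> linv x)" by (auto simp: linv_def)
    then show "cyl_prob m (w @ [x]) = (if w ! n \<noteq> linv x then cyl_prob m w / (2 * real m - 1) else 0)"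
      using cyl_snoc[OF ne, of m x] x l by simp
  qed
  also have "\<dots> = (\<Sum>w\<in>{w \<in> ?V. w ! n \<noteq> linv x}. cyl_prob m w) / (2 * real m - 1)"
    by (simp add: sum.inter_filter[symmetric, OF fin_W] sum_divide_distrib)
  also have "(\<Sum>w\<in>{w \<in> ?V. w ! n \<noteq> linv x}. cyl_prob m w)
      = (\<Sum>z\<in>letters m - {linv x}. \<Sum>w\<in>{w \<in> {w \<in> ?V. w ! n \<noteq> linv x}. w ! n = z}. cyl_prob m w)"
  proof (rule sum.group[symmetric])
    show "finite {w \<in> ?V. w ! n \<noteq> linv x}" using fin_W[of n m] by (rule rev_finite_subset) auto
    show "finite (letters m - {linv x})" using finite_letters by simp
    show "(\<lambda>w. w ! n) ` {w \<in> ?V. w ! n \<noteq> linv x} \<subseteq> letters m - {linv x}"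
      using nth_mem[of n] by fastforce
  qed
  also have "\<dots> = (\<Sum>z\<in>letters m - {linv x}. FF m n y z)"
    unfolding FF_def by (rule sum.cong[OF refl]) (rule sum.cong, auto)
  finally show ?thesis .
qed


lemma FF_0: "FF m 0 y x = (if x = y \<and> y \<in> letters m then 1 / (2 * real m) else 0)"
proof -
  have "{w. length w = Suc 0 \<and> set w \<subseteq> letters m \<and> w ! 0 = y \<and> w ! 0 = x}
        = (if x = y \<and> y \<in> letters m then {[y]} else {})"
    by (auto simp: length_Suc_conv)
  then show ?thesis unfolding FF_def
    by (auto simp: cyl_prob_def freely_reduced_def)
qed

lemma GG_sum: "GG m n y = (\<Sum>z\<in>letters m. FF m n y z)"
proof -
  let ?V = "{w. length w = Suc n \<and> set w \<subseteq> letters m \<and> w ! 0 = y}"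
  have "GG m n y = (\<Sum>z\<in>letters m. \<Sum>w\<in>{w \<in> ?V. w ! n = z}. cyl_prob m w)"
    unfolding GG_def
  proof (rule sum.group[symmetric])
    show "finite ?V" by (rule fin_W)
    show "finite (letters m)" by (rule finite_letters)
    show "(\<lambda>w. w ! n) ` ?V \<subseteq> letters m" using nth_mem[of n] by fastforce
  qed
  also have "\<dots> = (\<Sum>z\<in>letters m. FF m n y z)"
    unfolding FF_def by (rule sum.cong[OF refl]) (rule sum.cong, auto)
  finally show ?thesis .
qed

definition PP :: "nat \<Rightarrow> nat \<Rightarrow> letter \<Rightarrow> letter \<Rightarrow> real" where
  "PP m n y x = (1 - (- (1 / (2 * real m - 1))) ^ n) / (2 * real m)
     + (if x = (if even n then y else linv y) then (- (1 / (2 * real m - 1))) ^ n else 0)"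

lemma PP_sum:
  assumes "m \<ge> 1" "y \<in> letters m"
  shows "(\<Sum>z\<in>letters m. PP m n y z) = 1"
proof -
  have c: "(if even n then y else linv y) \<in> letters m" using assms linv_letters by auto
  have "(\<Sum>z\<in>letters m. PP m n y z) = real (2 * m) * ((1 - (- (1 / (2 * real m - 1))) ^ n) / (2 * real m))
     + (- (1 / (2 * real m - 1))) ^ n"
    unfolding PP_def sum.distrib using c finite_letters[of m]
    by (simp add: card_letters sum.delta')
  also have "\<dots> = 1" using assms by (simp add: field_simps)
  finally show ?thesis .
qed

lemma alg:
  fixes M z :: real
  assumes "M \<ge> 1"
  shows "(1 / (2 * M) - ((1 - z) / (2 * M) + t) / (2 * M)) / (2 * M - 1)
       = ((1 - (- (1 / (2 * M - 1))) * z) / (2 * M) + (- (1 / (2 * M - 1))) * t) / (2 * M)"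
proof -
  have q: "2 * M - 1 \<noteq> 0" "M \<noteq> 0" using assms by auto
  define r where "r = 1 / (2 * M - 1)"
  have r: "r * (2 * M - 1) = 1" using q by (simp add: r_def)
  have "(1 / (2 * M) - ((1 - z) / (2 * M) + t) / (2 * M)) / (2 * M - 1)
     = r * (1 / (2 * M) - ((1 - z) / (2 * M) + t) / (2 * M))" by (simp add: r_def)
  also have "\<dots> = ((1 + r * z) / (2 * M) - r * t) / (2 * M)"
  proof -
    have "r * (2*M - 1 + z) = 1 + r * z" using r by (simp add: algebra_simps)
    then show ?thesis using q by (simp add: field_simps)
  qed
  finally show ?thesis by (simp add: r_def)
qed

lemma FF_closed:
  assumes "m \<ge> 1" "y \<in> letters m" "x \<in> letters m"
  shows "FF m n y x = PP m n y x / (2 * real m)"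
  using assms(3)
proof (induction n arbitrary: x)
  case 0
  then show ?case using assms by (simp add: FF_0 PP_def)
next
  case (Suc n)
  have lx: "linv x \<in> letters m" using Suc.prems linv_letters by blast
  have "FF m (Suc n) y x = (\<Sum>z\<in>letters m - {linv x}. FF m n y z) / (2 * real m - 1)"
    by (rule FF_step[OF Suc.prems])
  also have "(\<Sum>z\<in>letters m - {linv x}. FF m n y z) = (\<Sum>z\<in>letters m. FF m n y z) - FF m n y (linv x)"
    using lx finite_letters by (simp add: sum_diff1)
  also have "(\<Sum>z\<in>letters m. FF m n y z) = (\<Sum>z\<in>letters m. PP m n y z / (2 * real m))"
    using Suc.IH by (intro sum.cong) auto
  also have "\<dots> = 1 / (2 * real m)" using PP_sum[OF assms(1,2)] by (simp add: sum_divide_distrib[symmetric])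
  also have "FF m n y (linv x) = PP m n y (linv x) / (2 * real m)" using Suc.IH lx by blast
  finally have e: "FF m (Suc n) y x = (1 / (2 * real m) - PP m n y (linv x) / (2 * real m)) / (2 * real m - 1)" .
  have d: "(linv x = (if even n then y else linv y)) = (x = (if even (Suc n) then y else linv y))"
  proof -
    have "\<And>a b. (linv a = b) = (a = linv b)" by (metis linv_linv)
    then show ?thesis by auto
  qed
  define t where "t = (if linv x = (if even n then y else linv y) then (- (1 / (2 * real m - 1))) ^ n else 0)"
  have "PP m n y (linv x) = (1 - (- (1 / (2 * real m - 1))) ^ n) / (2 * real m) + t"
    unfolding PP_def t_def by simp
  moreover have "PP m (Suc n) y x = (1 - (- (1 / (2 * real m - 1))) * (- (1 / (2 * real m - 1))) ^ n) / (2 * real m)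
      + (- (1 / (2 * real m - 1))) * t"
    unfolding PP_def t_def d by simp
  ultimately show ?case unfolding e using alg[of "real m" "(- (1 / (2 * real m - 1))) ^ n" t] assms(1)
    by simp
qed


lemma cond_PP:
  assumes "m \<ge> 1" "y \<in> letters m" "x \<in> letters m"
  shows "cond_prob m n x y = PP m n y x"
proof -
  have "GG m n y = (\<Sum>z\<in>letters m. PP m n y z / (2 * real m))"
    unfolding GG_sum using FF_closed[OF assms(1,2)] by (intro sum.cong) auto
  also have "\<dots> = 1 / (2 * real m)" using PP_sum[OF assms(1,2)] by (simp add: sum_divide_distrib[symmetric])
  finally have g: "GG m n y = 1 / (2 * real m)" .
  have "cond_prob m n x y = FF m n y x / GG m n y"
    unfolding cond_prob_def FF_def GG_def by simp
  then show ?thesis using g FF_closed[OF assms] assms(1) by simp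
qed

lemma E_closed:
  assumes "m \<ge> 1"
  shows "frak_m m * s_seq m k = (1 - (- (1 / (2 * real m - 1))) ^ k) / (2 * real m)"
proof -
  define r where "r = 1 / (2 * real m - 1)"
  have q: "2 * real m - 1 \<noteq> 0" "real m \<noteq> 0" using assms by auto
  have r0: "r > 0" using assms by (simp add: r_def)
  have "s_seq m k = (1 - (- r) ^ k) / (1 - (- r))"
    unfolding s_seq_def frak_m_def r_def[symmetric] using r0 by (simp add: sum_gp_strict)
  moreover have "r / (1 + r) = 1 / (2 * real m)" using q by (simp add: r_def field_simps)
  ultimately have "frak_m m * s_seq m k = r * ((1 - (- r) ^ k) / (1 + r))"
    by (simp add: frak_m_def r_def[symmetric])
  also have "\<dots> = (1 - (- r) ^ k) * (r / (1 + r))" by (metis times_divide_eq_right mult.commute)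
  also have "\<dots> = (1 - (- r) ^ k) / (2 * real m)" using \<open>r / (1 + r) = 1 / (2 * real m)\<close> by simp
  finally show ?thesis by (simp add: r_def)
qed

theorem corollary2p2:
  fixes m n :: nat and x y :: letter
  assumes "m \<ge> 2" and "n \<ge> 1" and "x \<in> letters m" and "y \<in> letters m"
  shows "min (frak_m m * s_seq m (n - 1)) (frak_m m * s_seq m n) \<le> cond_prob m n x y
       \<and> cond_prob m n x y \<le> max (frak_m m * s_seq m (n - 1)) (frak_m m * s_seq m n)
       \<and> (2 * real m - 2) / (2 * real m - 1)^2 \<le> cond_prob m 2 x y
       \<and> cond_prob m 2 x y \<le> 1 / (2 * real m - 1)"
proof -
  have m1: "m \<ge> 1" using assms by simp
  define r where "r = 1 / (2 * real m - 1)"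
  have q: "2 * real m - 1 \<noteq> 0" "real m \<noteq> 0" using m1 by auto
  have r0: "r > 0" "r * (2 * real m - 1) = 1" using m1 q by (auto simp: r_def)
  obtain k where k: "n = Suc k" using assms(2) by (cases n) auto
  have En: "frak_m m * s_seq m n = (1 - (- r) ^ n) / (2 * real m)"
    using E_closed[OF m1] by (simp add: r_def)
  have Ek: "frak_m m * s_seq m (n - 1) = (1 - (- r) ^ n) / (2 * real m) + (- r) ^ n"
  proof -
    have "frak_m m * s_seq m (n - 1) = (1 - (- r) ^ k) / (2 * real m)"
      using E_closed[OF m1, of k] k by (simp add: r_def)
    also have "\<dots> = (1 + r * (- r) ^ k - r * (- r) ^ k * (2 * real m)) / (2 * real m)"
    proof -
      have "r * (- r) ^ k * (2 * real m - 1) = (- r) ^ k * (r * (2 * real m - 1))" by (simp add: algebra_simps)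
      then have "r * (- r) ^ k * (2 * real m - 1) = (- r) ^ k" using r0(2) by (metis mult.right_neutral)
      then show ?thesis by (simp add: algebra_simps)
    qed
    also have "\<dots> = (1 - (- r) ^ n) / (2 * real m) + (- r) ^ n"
      using q k by (simp add: field_simps)
    finally show ?thesis .
  qed
  have P: "cond_prob m n x y = (1 - (- r) ^ n) / (2 * real m) + (if x = (if even n then y else linv y) then (- r) ^ n else 0)"
    using cond_PP[OF m1 assms(4,3)] by (simp add: PP_def r_def)
  have A: "min (frak_m m * s_seq m (n - 1)) (frak_m m * s_seq m n) \<le> cond_prob m n x y
       \<and> cond_prob m n x y \<le> max (frak_m m * s_seq m (n - 1)) (frak_m m * s_seq m n)"
    unfolding P En Ek by auto
  have P2: "cond_prob m 2 x y = (1 - r ^ 2) / (2 * real m) + (if x = y then r ^ 2 else 0)"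
    using cond_PP[OF m1 assms(4,3)] by (simp add: PP_def r_def)
  define Q where "Q = 2 * real m - 1"
  have Q: "Q \<noteq> 0" "Q + 1 \<noteq> 0" "2 * real m = Q + 1" "2 * real m - 2 = Q - 1" using q m1 by (auto simp: Q_def)
  have e1: "(1 - r ^ 2) / (2 * real m) = (2 * real m - 2) / (2 * real m - 1)^2"
  proof -
    have "(1 - (1/Q) ^ 2) / (Q + 1) = (Q - 1) / Q ^ 2"
    proof -
      have "1 - (1/Q)^2 = (Q-1)*(Q+1)/Q^2" using Q by (simp add: field_simps power2_eq_square algebra_simps)
      then show ?thesis using Q(2) by simp
    qed
    then show ?thesis unfolding r_def Q_def[symmetric] Q(4) Q(3) by (simp add: algebra_simps)
  qed
  have e2: "(1 - r ^ 2) / (2 * real m) + r ^ 2 = 1 / (2 * real m - 1)"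
  proof -
    have a: "(1 - (1/Q) ^ 2) / (Q + 1) = (Q - 1) / Q ^ 2"
    proof -
      have "1 - (1/Q)^2 = (Q-1)*(Q+1)/Q^2" using Q by (simp add: field_simps power2_eq_square algebra_simps)
      then show ?thesis using Q(2) by simp
    qed
    have "(Q - 1) / Q ^ 2 + (1/Q)^2 = 1 / Q"
      using Q by (simp add: field_simps power2_eq_square)
    then have "(1 - (1/Q) ^ 2) / (Q + 1) + (1/Q)^2 = 1 / Q" using a by simp
    then show ?thesis unfolding r_def Q_def[symmetric] Q(4) Q(3) by (simp add: algebra_simps)
  qed
  have B: "(2 * real m - 2) / (2 * real m - 1)^2 \<le> cond_prob m 2 x y
       \<and> cond_prob m 2 x y \<le> 1 / (2 * real m - 1)"
  proof -
    define E where "E = (1 - r ^ 2) / (2 * real m)"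
    have r2: "r ^ 2 \<ge> 0" by simp
    have c: "cond_prob m 2 x y = E \<or> cond_prob m 2 x y = E + r ^ 2" unfolding P2 E_def by auto
    have h1: "E = (2 * real m - 2) / (2 * real m - 1)^2" using e1 by (simp add: E_def)
    have h2: "E + r ^ 2 = 1 / (2 * real m - 1)" using e2 by (simp add: E_def)
    from c show ?thesis
    proof
      assume "cond_prob m 2 x y = E" then show ?thesis using h1 h2 r2 by linarith
    next
      assume "cond_prob m 2 x y = E + r ^ 2" then show ?thesis using h1 h2 r2 by linarith
    qed
  qed
  show ?thesis using A B by blast
qed

end
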